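(* Let $a_1,\dots,a_q,b_1,\dots,b_q>0$ and \[ R(x)=\frac{\prod_{k=1}^{q}(a_k+x)}{\prod_{k=1}^{q}(b_k+x)}. \] Then $R$ is monotone increasing on $(0,\infty)$ if \[ \frac{e_q(b_1,\ldots,b_q)}{e_q(a_1,\ldots,a_q)}\ge\frac{e_{q-1}(b_1,\ldots,b_q)}{e_{q-1}(a_1,\ldots,a_q)}\ge\cdots\ge\frac{e_1(b_1,\ldots,b_q)}{e_1(a_1,\ldots,a_q)}\ge1, \] and monotone decreasing on $(0,\infty)$ if \[ \frac{e_q(b_1,\ldots,b_q)}{e_q(a_1,\ldots,a_q)}\le\frac{e_{q-1}(b_1,\ldots,b_q)}{e_{q-1}(a_1,\ldots,a_q)}\le\cdots\le\frac{e_1(b_1,\ldots,b_q)}{e_1(a_1,\ldots,a_q)}\le1. \]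
   Context: $e_m(c_1,\dots,c_q)=\sum_{1\le i_1<\cdots<i_m\le q}c_{i_1}\cdots c_{i_m}$ denotes the $m$-th elementary symmetric polynomial ($e_0=1$). *)

theory Defs
  imports "HOL-Analysis.Analysis"
begin

definition esym :: "nat \<Rightarrow> nat \<Rightarrow> (nat \<Rightarrow> real) \<Rightarrow> real" where
  "esym q m c = (\<Sum>S\<in>{S. S \<subseteq> {1..q} \<and> card S = m}. \<Prod>i\<in>S. c i)"

end

theory Submission imports Defs begin

lemma esym0: "esym q 0 c = 1"
proof -
  have "{S. S \<subseteq> {1..q} \<and> card S = 0} = {{}}"
    using finite_subset by fastforce
  then show ?thesis by (simp add: esym_def)
qed

lemma esym_pos:
  assumes "\<forall>k\<in>{1..q}. c k > 0" "m \<le> q"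
  shows "esym q m c > 0"
  unfolding esym_def
proof (rule sum_pos)
  show "finite {S. S \<subseteq> {1..q} \<and> card S = m}" by simp
  show "{S. S \<subseteq> {1..q} \<and> card S = m} \<noteq> {}"
  proof -
    have "{1..m} \<in> {S. S \<subseteq> {1..q} \<and> card S = m}" using assms(2) by auto
    then show ?thesis by blast
  qed
  fix S assume "S \<in> {S. S \<subseteq> {1..q} \<and> card S = m}"
  then show "0 < prod c S" using assms(1) by (intro prod_pos) auto
qed

lemma expand:
  fixes c :: "nat \<Rightarrow> real"
  shows "(\<Prod>k=1..q. c k + x) = (\<Sum>k=0..q. esym q (q-k) c * x^k)"
proof -
  have "(\<Prod>k=1..q. c k + x) = (\<Sum>X\<in>Pow {1..q}. (\<Prod>i\<in>X. c i) * (\<Prod>i\<in>{1..q}-X. x))"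
    by (rule prod_add) simp
  also have "\<dots> = (\<Sum>X\<in>Pow {1..q}. (\<Prod>i\<in>X. c i) * x^(q - card X))"
    by (intro sum.cong refl) (auto simp: card_Diff_subset finite_subset)
  also have "\<dots> = (\<Sum>m\<in>{0..q}. \<Sum>X\<in>{X. X \<in> Pow {1..q} \<and> card X = m}. (\<Prod>i\<in>X. c i) * x^(q - card X))"
    by (rule sum.group[symmetric]) (auto simp: card_mono[of "{1..q}", simplified])
  also have "\<dots> = (\<Sum>m\<in>{0..q}. esym q m c * x^(q-m))"
    unfolding esym_def sum_distrib_right
    by (intro sum.cong refl) auto
  also have "\<dots> = (\<Sum>k=0..q. esym q (q-k) c * x^k)"
    by (rule sum.reindex_bij_witness[of _ "\<lambda>k. q-k" "\<lambda>k. q-k"]) auto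
  finally show ?thesis .
qed

lemma ratio_mono:
  fixes al be :: "nat \<Rightarrow> real"
  assumes x: "0 \<le> x1" "x1 \<le> x2"
    and G: "(\<Sum>k=0..n. be k * x1^k) > 0" "(\<Sum>k=0..n. be k * x2^k) > 0"
    and c: "\<And>i j. j \<le> i \<Longrightarrow> i \<le> n \<Longrightarrow> al j * be i \<le> al i * be j"
  shows "(\<Sum>k=0..n. al k * x1^k) / (\<Sum>k=0..n. be k * x1^k) \<le> (\<Sum>k=0..n. al k * x2^k) / (\<Sum>k=0..n. be k * x2^k)"
proof -
  define h where "h i j = al i * be j * (x1^i * x2^j - x2^i * x1^j)" for i j
  have key: "h i j + h j i \<le> 0" if "i \<le> n" "j \<le> n" for i j
  proof -
    have e: "h i j + h j i = (al i * be j - al j * be i) * (x1^i * x2^j - x1^j * x2^i)"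
      unfolding h_def by (simp add: algebra_simps)
    have p: "x1^i * x2^j \<le> x1^j * x2^i" if "j \<le> i" for i j
    proof -
      have "x1^(i-j) \<le> x2^(i-j)" using x by (simp add: power_mono)
      then have "x1^j * x1^(i-j) * x2^j \<le> x1^j * x2^(i-j) * x2^j"
        using x by (intro mult_right_mono mult_left_mono) auto
      then show ?thesis using that by (simp add: power_add[symmetric] mult.commute mult.left_commute)
    qed
    show ?thesis
    proof (cases "j \<le> i")
      case True
      then show ?thesis unfolding e using c[OF True that(1)] p[OF True]
        by (intro mult_nonneg_nonpos) auto
    next
      case False
      then have "i \<le> j" by simp
      then show ?thesis unfolding e using c[OF \<open>i \<le> j\<close> that(2)] p[OF \<open>i \<le> j\<close>]
        by (intro mult_nonpos_nonneg) auto
    qed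
  qed
  define S where "S = (\<Sum>i=0..n. \<Sum>j=0..n. h i j)"
  have S2: "S = (\<Sum>i=0..n. \<Sum>j=0..n. h j i)" unfolding S_def by (rule sum.swap)
  have "2 * S = (\<Sum>i=0..n. \<Sum>j=0..n. h i j + h j i)"
    by (subst mult_2, subst S2) (simp add: S_def sum.distrib)
  also have "\<dots> \<le> 0" by (intro sum_nonpos) (simp add: key)
  finally have S0: "S \<le> 0" by simp
  have "(\<Sum>k=0..n. al k * x1^k) * (\<Sum>k=0..n. be k * x2^k) - (\<Sum>k=0..n. al k * x2^k) * (\<Sum>k=0..n. be k * x1^k) = S"
    unfolding S_def h_def sum_product sum_subtractf[symmetric]
    by (intro sum.cong refl) (simp add: algebra_simps)
  then show ?thesis using S0 G by (simp add: divide_simps)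
qed

lemma chain_mono:
  fixes r :: "nat \<Rightarrow> real"
  assumes "\<And>m. m < q \<Longrightarrow> r m \<le> r (Suc m)" "m \<le> n" "n \<le> q"
  shows "r m \<le> r n"
  using assms(2,3)
proof (induction n)
  case 0 then show ?case by simp
next
  case (Suc n)
  show ?case
  proof (cases "m = Suc n")
    case False
    then have "r m \<le> r n" using Suc by simp
    also have "\<dots> \<le> r (Suc n)" using assms(1) Suc by simp
    finally show ?thesis .
  qed simp
qed

theorem lemma2:
  fixes q :: nat and a b :: "nat \<Rightarrow> real"
  assumes apos: "\<forall>k\<in>{1..q}. a k > 0"
    and bpos: "\<forall>k\<in>{1..q}. b k > 0"
  defines "R \<equiv> (\<lambda>x::real. (\<Prod>k=1..q. a k + x) / (\<Prod>k=1..q. b k + x))"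
  shows "((\<forall>m\<in>{1..<q}. esym q (Suc m) b / esym q (Suc m) a \<ge> esym q m b / esym q m a)
            \<and> esym q 1 b / esym q 1 a \<ge> 1
          \<longrightarrow> mono_on {0<..} R)
       \<and> ((\<forall>m\<in>{1..<q}. esym q (Suc m) b / esym q (Suc m) a \<le> esym q m b / esym q m a)
            \<and> esym q 1 b / esym q 1 a \<le> 1
          \<longrightarrow> antimono_on {0<..} R)"
proof -
  define A where "A m = esym q m a" for m
  define B where "B m = esym q m b" for m
  define al where "al k = A (q-k)" for k
  define be where "be k = B (q-k)" for k
  have Ap: "A m > 0" if "m \<le> q" for m using esym_pos[OF apos that] A_def by simp
  have Bp: "B m > 0" if "m \<le> q" for m using esym_pos[OF bpos that] B_def by simp
  have A0: "A 0 = 1" "B 0 = 1" by (simp_all add: A_def B_def esym0)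
  have PA: "(\<Prod>k=1..q. a k + x) = (\<Sum>k=0..q. al k * x^k)" for x
    unfolding expand al_def A_def ..
  have PB: "(\<Prod>k=1..q. b k + x) = (\<Sum>k=0..q. be k * x^k)" for x
    unfolding expand be_def B_def ..
  have PAp: "(\<Prod>k=1..q. a k + x) > 0" if "x > 0" for x
    using apos that by (intro prod_pos) (auto intro: add_pos_pos)
  have PBp: "(\<Prod>k=1..q. b k + x) > 0" if "x > 0" for x
    using bpos that by (intro prod_pos) (auto intro: add_pos_pos)
  define r where "r m = B m / A m" for m
  show ?thesis
  proof (intro conjI impI)
    assume h: "(\<forall>m\<in>{1..<q}. esym q (Suc m) b / esym q (Suc m) a \<ge> esym q m b / esym q m a)
            \<and> esym q 1 b / esym q 1 a \<ge> 1"
    have st: "r m \<le> r (Suc m)" if "m < q" for m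
    proof (cases "m = 0")
      case True then show ?thesis using h A0 by (simp add: r_def A_def B_def)
    next
      case False then show ?thesis using h that by (simp add: r_def A_def B_def)
    qed
    have c: "al j * be i \<le> al i * be j" if "j \<le> i" "i \<le> q" for i j
    proof -
      have "r (q-i) \<le> r (q-j)" using that by (intro chain_mono[where q=q and r=r, OF st]) auto
      then show ?thesis using Ap[of "q-i"] Ap[of "q-j"]
        by (simp add: r_def al_def be_def divide_simps mult.commute)
    qed
    show "mono_on {0<..} R"
    proof (rule mono_onI)
      fix x1 x2 :: real assume "x1 \<in> {0<..}" "x2 \<in> {0<..}" "x1 \<le> x2"
      then show "R x1 \<le> R x2" unfolding R_def PA PB
        using PBp[of x1] PBp[of x2] unfolding PB
        by (intro ratio_mono c) auto
    qed
  next
    assume h: "(\<forall>m\<in>{1..<q}. esym q (Suc m) b / esym q (Suc m) a \<le> esym q m b / esym q m a)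
            \<and> esym q 1 b / esym q 1 a \<le> 1"
    define r' where "r' m = A m / B m" for m
    have st: "r' m \<le> r' (Suc m)" if "m < q" for m
    proof -
      have "r (Suc m) \<le> r m"
      proof (cases "m = 0")
        case True then show ?thesis using h A0 by (simp add: r_def A_def B_def)
      next
        case False then show ?thesis using h that by (simp add: r_def A_def B_def)
      qed
      then show ?thesis using Ap[of m] Ap[of "Suc m"] Bp[of m] Bp[of "Suc m"] that
        by (simp add: r_def r'_def divide_simps mult.commute)
    qed
    have c: "be j * al i \<le> be i * al j" if "j \<le> i" "i \<le> q" for i j
    proof -
      have "r' (q-i) \<le> r' (q-j)" using that by (intro chain_mono[where q=q and r=r', OF st]) auto
      then show ?thesis using Bp[of "q-i"] Bp[of "q-j"]
        by (simp add: r'_def al_def be_def divide_simps mult.commute)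
    qed
    show "antimono_on {0<..} R"
    proof (rule monotone_onI)
      fix x1 x2 :: real assume x: "x1 \<in> {0<..}" "x2 \<in> {0<..}" "x1 \<le> x2"
      have "(\<Sum>k=0..q. be k * x1^k) / (\<Sum>k=0..q. al k * x1^k) \<le> (\<Sum>k=0..q. be k * x2^k) / (\<Sum>k=0..q. al k * x2^k)"
        using PAp[of x1] PAp[of x2] x unfolding PA
        by (intro ratio_mono c) auto
      then show "R x2 \<le> R x1" unfolding R_def PA PB
        using PAp[of x1] PAp[of x2] PBp[of x1] PBp[of x2] x unfolding PA PB
        by (simp add: divide_simps mult.commute)
    qed
  qed
qed

end
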